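(* Assume $X$ satisfies the $G$-latent model with covariance $\Sigma=ACA^t+\Gamma$. If $\Delta(C)>\frac{2}{m}|\Gamma|_V$, then $B^*$ is the unique maximizer of $B\mapsto\langle\Sigma,B\rangle$ over $\mathcal{D}$.
   Context: Let $G=\{G_1,\dots,G_K\}$ be a partition of $[p]$ into nonempty groups, $k(a)$ the index with $a\in G_{k(a)}$, $m=\min_k|G_k|$. A centered random vector $X$ satisfies the $G$-latent model if $X_a=Z_{k(a)}+E_a$ for all $a$, where $Z\in\mathbb{R}^K$ is centered, $E\in\mathbb{R}^p$ is centered, independent of $Z$, with independent coordinates and $\mathrm{Var}(E_a)=\gamma_{k(a)}$. Then $\Sigma=\mathrm{Cov}(X)=ACA^t+\Gamma$ with $A_{ak}=1_{\{a\in G_k\}}$, $C=\mathrm{Cov}(Z)$, $\Gamma=\mathrm{diag}(\gamma_{k(a)})_a$. $\Delta(C)=\min_{j<k}(C_{jj}+C_{kk}-2C_{jk})$. For diagonal $D$, $|D|_V=\max_aD_{aa}-\min_aD_{aa}$. $B^*$ is the $p\times p$ matrix with $B^*_{ab}=1/|G_k|$ if $a,b\in G_k$ for some $k$, and $0$ otherwise. $\langle M,N\rangle=\mathrm{tr}(M^tN)$. $\mathcal{C}$ is the set of symmetric positive semidefinite $p\times p$ matrices $B$ with $\sum_aB_{ab}=1$ for all $b$, $B_{ab}\ge0$ for all $a,b$, and $\mathrm{tr}(B)=K$; $\mathcal{D}=\{B\in\mathcal{C}: B^2=B\}$. *)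

theory Defs
  imports "HOL-Analysis.Analysis"
begin

text \<open>Index set [p] is the finite type 'p, group labels [K] the finite type 'k.
  The partition G is given by the label map grp :: 'p => 'k (grp a = k(a));
  G_k = {a. grp a = k}; nonemptiness of all groups = surjectivity of grp.\<close>

definition group_of :: "('p \<Rightarrow> 'k) \<Rightarrow> 'k \<Rightarrow> 'p set" where
  "group_of grp k = {a. grp a = k}"

definition min_group_size :: "('p::finite \<Rightarrow> 'k::finite) \<Rightarrow> nat" where
  "min_group_size grp = Min (range (\<lambda>k. card (group_of grp k)))"

definition membership_matrix :: "('p::finite \<Rightarrow> 'k::finite) \<Rightarrow> real^'k^'p" where
  "membership_matrix grp = (\<chi> a k. if grp a = k then 1 else 0)"

definition diag_mat :: "real^'n \<Rightarrow> real^'n^'n" where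
  "diag_mat d = (\<chi> i j. if i = j then d $ i else 0)"

definition Gamma_mat :: "('p::finite \<Rightarrow> 'k::finite) \<Rightarrow> real^'k \<Rightarrow> real^'p^'p" where
  "Gamma_mat grp \<gamma> = diag_mat (\<chi> a. \<gamma> $ grp a)"

definition latent_cov :: "('p::finite \<Rightarrow> 'k::finite) \<Rightarrow> real^'k^'k \<Rightarrow> real^'k \<Rightarrow> real^'p^'p" where
  "latent_cov grp C \<gamma> =
     membership_matrix grp ** C ** transpose (membership_matrix grp) + Gamma_mat grp \<gamma>"

text \<open>Delta(C) = min over pairs of distinct labels; +infinity if K = 1 (empty min).\<close>
definition Delta :: "real^'k^'k \<Rightarrow> ereal" where
  "Delta C = (INF jk \<in> {(j,k). j \<noteq> k}. ereal (C $ fst jk $ fst jk + C $ snd jk $ snd jk - 2 * C $ fst jk $ snd jk))"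

definition diag_spread :: "real^'n::finite^'n \<Rightarrow> real" where
  "diag_spread D = Max (range (\<lambda>a. D $ a $ a)) - Min (range (\<lambda>a. D $ a $ a))"

definition Bstar :: "('p::finite \<Rightarrow> 'k::finite) \<Rightarrow> real^'p^'p" where
  "Bstar grp = (\<chi> a b. if grp a = grp b then 1 / real (card (group_of grp (grp a))) else 0)"

definition frob_inner :: "real^'n::finite^'n \<Rightarrow> real^'n^'n \<Rightarrow> real" where
  "frob_inner M N = trace (transpose M ** N)"

definition psd :: "real^'n::finite^'n \<Rightarrow> bool" where
  "psd M \<longleftrightarrow> transpose M = M \<and> (\<forall>x. 0 \<le> x \<bullet> (M *v x))"

definition setC :: "nat \<Rightarrow> (real^'p::finite^'p) set" where
  "setC K = {B. psd B \<and> (\<forall>b. (\<Sum>a\<in>UNIV. B $ a $ b) = 1) \<and> (\<forall>a b. 0 \<le> B $ a $ b)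
               \<and> trace B = real K}"

definition setD :: "nat \<Rightarrow> (real^'p::finite^'p) set" where
  "setD K = {B \<in> setC K. B ** B = B}"

end

theory Submission
  imports Defs
begin


lemma sum_by_group:
  fixes grp :: "'p::finite \<Rightarrow> 'k::finite" and F :: "'p \<Rightarrow> real"
  shows "(\<Sum>a\<in>UNIV. F a) = (\<Sum>k\<in>UNIV. \<Sum>a\<in>UNIV. if grp a = k then F a else (0::real))"
proof -
  have "(\<Sum>k\<in>UNIV. \<Sum>a\<in>{x. x \<in> UNIV \<and> grp x = k}. F a) = (\<Sum>a\<in>UNIV. F a)"
    by (rule sum.group) auto
  moreover have "\<And>k. (\<Sum>a\<in>{x. x \<in> UNIV \<and> grp x = k}. F a) = (\<Sum>a\<in>UNIV. if grp a = k then F a else 0)"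
    by (simp add: sum.If_cases)
  ultimately show ?thesis by simp
qed

lemma card_group_pos:
  fixes grp :: "'p::finite \<Rightarrow> 'k::finite"
  assumes "surj grp" shows "0 < card (group_of grp k)"
proof -
  obtain a where "grp a = k" using assms by (metis surjD)
  then have "a \<in> group_of grp k" by (simp add: group_of_def)
  then show ?thesis by (metis card_gt_0_iff empty_iff finite)
qed

lemma card_group_sum:
  fixes grp :: "'p::finite \<Rightarrow> 'k::finite"
  shows "(\<Sum>a\<in>UNIV. if grp a = k then (1::real) else 0) = real (card (group_of grp k))"
  by (simp add: sum.If_cases group_of_def)

lemma min_le:
  fixes grp :: "'p::finite \<Rightarrow> 'k::finite"
  shows "min_group_size grp \<le> card (group_of grp k)"
  unfolding min_group_size_def by (rule Min_le) auto

lemma min_pos: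
  fixes grp :: "'p::finite \<Rightarrow> 'k::finite"
  assumes "surj grp" shows "0 < min_group_size grp"
proof -
  have "min_group_size grp \<in> range (\<lambda>k. card (group_of grp k))"
    unfolding min_group_size_def by (rule Min_in) auto
  then show ?thesis using card_group_pos[OF assms] by auto
qed

lemma sum_group_const:
  fixes grp :: "'p::finite \<Rightarrow> 'k::finite"
  assumes "surj grp"
  shows "(\<Sum>a\<in>UNIV. h (grp a) / real (card (group_of grp (grp a)))) = (\<Sum>k\<in>UNIV. h k)"
proof -
  have "(\<Sum>a\<in>UNIV. h (grp a) / real (card (group_of grp (grp a))))
     = (\<Sum>k\<in>UNIV. \<Sum>a\<in>UNIV. if grp a = k then h k / real (card (group_of grp k)) else 0)"
    by (subst sum_by_group[of _ grp]) (auto intro!: sum.cong)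
  also have "\<dots> = (\<Sum>k\<in>UNIV. h k / real (card (group_of grp k)) * (\<Sum>a\<in>UNIV. if grp a = k then 1 else 0))"
    by (simp add: sum_distrib_left if_distrib cong: if_cong)
  also have "\<dots> = (\<Sum>k\<in>UNIV. h k)"
    using card_group_pos[OF assms] by (simp add: card_group_sum del: card_gt_0_iff)
       (metis card.empty less_irrefl)
  finally show ?thesis .
qed

lemma delta_sum1[simp]: "(\<Sum>k\<in>UNIV. (if x = k then 1 else 0) * f k) = (f (x::'a::finite) :: real)"
  by (subst sum.cong[OF refl, of _ _ "\<lambda>k. if x = k then f k else 0"]) (auto simp: sum.delta')
lemma delta_sum2[simp]: "(\<Sum>k\<in>UNIV. f k * (if x = k then 1 else 0)) = (f (x::'a::finite) :: real)"
  by (subst sum.cong[OF refl, of _ _ "\<lambda>k. if x = k then f k else 0"]) (auto simp: sum.delta')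

lemma latent_cov_entry:
  fixes grp :: "'p::finite \<Rightarrow> 'k::finite"
  shows "latent_cov grp C \<gamma> $ a $ b = C $ grp a $ grp b + (if a = b then \<gamma> $ grp a else 0)"
  by (simp add: latent_cov_def matrix_matrix_mult_def membership_matrix_def transpose_def
      Gamma_mat_def diag_mat_def)

lemma frob_inner_sum: "frob_inner M N = (\<Sum>i\<in>UNIV. \<Sum>j\<in>UNIV. M $ j $ i * N $ j $ i)"
  by (simp add: frob_inner_def trace_def matrix_matrix_mult_def transpose_def)

lemma psd_quad:
  assumes "psd (B::real^'n::finite^'n)"
  shows "0 \<le> (\<Sum>i\<in>UNIV. \<Sum>j\<in>UNIV. f i * B $ i $ j * f j)"
proof -
  have "0 \<le> (\<chi> i. f i) \<bullet> (B *v (\<chi> i. f i))" using assms by (simp add: psd_def)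
  also have "\<dots> = (\<Sum>i\<in>UNIV. \<Sum>j\<in>UNIV. f i * B $ i $ j * f j)"
    by (simp add: inner_vec_def matrix_vector_mult_def sum_distrib_left mult.assoc)
  finally show ?thesis .
qed

lemma psd_sym:
  assumes "psd (B::real^'n::finite^'n)" shows "B $ i $ j = B $ j $ i"
  using assms unfolding psd_def by (metis transpose_def vec_lambda_beta)



lemma setC_facts:
  assumes "B \<in> setC K"
  shows "psd B" "\<And>b. (\<Sum>a\<in>UNIV. B $ a $ b) = 1" "\<And>a. (\<Sum>b\<in>UNIV. B $ a $ b) = 1"
    "\<And>a b. 0 \<le> B $ a $ b" "(\<Sum>a\<in>UNIV. B $ a $ a) = real K" "\<And>a b. B $ a $ b = B $ b $ a"
proof -
  show p: "psd B" using assms by (simp add: setC_def)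
  show c: "\<And>b. (\<Sum>a\<in>UNIV. B $ a $ b) = 1" using assms by (simp add: setC_def)
  show s: "\<And>a b. B $ a $ b = B $ b $ a" using psd_sym[OF p] .
  show "\<And>a. (\<Sum>b\<in>UNIV. B $ a $ b) = 1" using c by (subst s) 
  show "\<And>a b. 0 \<le> B $ a $ b" using assms by (simp add: setC_def)
  show "(\<Sum>a\<in>UNIV. B $ a $ a) = real K" using assms by (simp add: setC_def trace_def)
qed

definition "nn grp k = real (card (group_of grp k))"
definition "TT grp (B::real^'p::finite^'p) k = (\<Sum>a\<in>UNIV. if grp a = k then B $ a $ a else 0)"
definition "II grp (B::real^'p::finite^'p) k = (\<Sum>c\<in>UNIV. \<Sum>d\<in>UNIV. if grp c = k \<and> grp d = k then B $ c $ d else 0)"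
definition "LL grp (B::real^'p::finite^'p) k = (\<Sum>c\<in>UNIV. \<Sum>d\<in>UNIV. if grp c = k \<and> grp d \<noteq> k then B $ c $ d else 0)"
definition "RR grp (B::real^'p::finite^'p) k a = (\<Sum>j\<in>UNIV. if grp j = k then B $ a $ j else 0)"

lemma IL:
  fixes grp :: "'p::finite \<Rightarrow> 'k::finite"
  assumes BC: "B \<in> setC K"
  shows "II grp B k + LL grp B k = nn grp k"
proof -
  have pt: "\<And>c. (\<Sum>d\<in>UNIV. if grp c = k \<and> grp d = k then B $ c $ d else 0) +
         (\<Sum>d\<in>UNIV. if grp c = k \<and> grp d \<noteq> k then B $ c $ d else 0) =
         (if grp c = k then 1 else 0)"
  proof -
    fix c
    have "\<And>d. (if grp c = k \<and> grp d = k then B $ c $ d else 0) + (if grp c = k \<and> grp d \<noteq> k then B $ c $ d else 0)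
       = (if grp c = k then B $ c $ d else 0)" by auto
    then have "(\<Sum>d\<in>UNIV. if grp c = k \<and> grp d = k then B $ c $ d else 0) +
         (\<Sum>d\<in>UNIV. if grp c = k \<and> grp d \<noteq> k then B $ c $ d else 0) =
         (\<Sum>d\<in>UNIV. if grp c = k then B $ c $ d else 0)"
      by (simp only: sum.distrib[symmetric])
    also have "\<dots> = (if grp c = k then 1 else 0)" using setC_facts(3)[OF BC] by simp
    finally show "?thesis c" .
  qed
  have "II grp B k + LL grp B k = (\<Sum>c\<in>UNIV. (\<Sum>d\<in>UNIV. if grp c = k \<and> grp d = k then B $ c $ d else 0) +
         (\<Sum>d\<in>UNIV. if grp c = k \<and> grp d \<noteq> k then B $ c $ d else 0))"
    unfolding II_def LL_def by (rule sum.distrib[symmetric])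
  also have "\<dots> = (\<Sum>c\<in>UNIV. if grp c = k then 1 else 0)"
    using pt by (rule sum.cong[OF refl])
  also have "\<dots> = nn grp k" by (simp add: nn_def card_group_sum)
  finally show ?thesis .
qed

lemma LL_nonneg: assumes "B \<in> setC K" shows "0 \<le> LL grp B k"
  unfolding LL_def using setC_facts(4)[OF assms] by (intro sum_nonneg) auto

lemma nn_pos: fixes grp :: "'p::finite \<Rightarrow> 'k::finite" assumes "surj grp" shows "0 < nn grp k" unfolding nn_def using card_group_pos[OF assms] by simp



lemma bilin_expand:
  fixes B :: "real^'p::finite^'p"
  shows "(\<Sum>i\<in>UNIV. \<Sum>j\<in>UNIV. (d i - u i) * B $ i $ j * (d j - u j)) =
    (\<Sum>i\<in>UNIV. \<Sum>j\<in>UNIV. d i * B $ i $ j * d j) - (\<Sum>i\<in>UNIV. \<Sum>j\<in>UNIV. d i * B $ i $ j * u j)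
    - (\<Sum>i\<in>UNIV. \<Sum>j\<in>UNIV. u i * B $ i $ j * d j) + (\<Sum>i\<in>UNIV. \<Sum>j\<in>UNIV. u i * B $ i $ j * u j)"
proof -
  have "\<And>i j. (d i - u i) * B $ i $ j * (d j - u j) = d i * B $ i $ j * d j - d i * B $ i $ j * u j
     - u i * B $ i $ j * d j + u i * B $ i $ j * u j" by (simp add: algebra_simps)
  then show ?thesis by (simp add: sum.distrib sum_subtractf)
qed

lemma delta_sum3[simp]: "(\<Sum>k\<in>UNIV. (if k = x then 1 else 0) * f k) = (f (x::'a::finite) :: real)"
  by (subst sum.cong[OF refl, of _ _ "\<lambda>k. if k = x then f k else 0"]) (auto simp: sum.delta)
lemma delta_sum4[simp]: "(\<Sum>k\<in>UNIV. f k * (if k = x then 1 else 0)) = (f (x::'a::finite) :: real)"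
  by (subst sum.cong[OF refl, of _ _ "\<lambda>k. if k = x then f k else 0"]) (auto simp: sum.delta)

lemma quad_val:
  fixes grp :: "'p::finite \<Rightarrow> 'k::finite"
  assumes BC: "B \<in> setC K"
  shows "(\<Sum>i\<in>UNIV. \<Sum>j\<in>UNIV. ((if i = a then 1 else 0) - (if grp i = k then 1/n else 0)) * B $ i $ j
         * ((if j = a then 1 else 0) - (if grp j = k then 1/n else 0)))
     = B $ a $ a - 2 * RR grp B k a / n + II grp B k / n^2"
proof -
  define d where "d = (\<lambda>i::'p. if i = a then 1 else (0::real))"
  define u where "u = (\<lambda>i. if grp i = k then 1/n else (0::real))"
  have sym: "\<And>a b. B $ a $ b = B $ b $ a" using setC_facts(6)[OF BC] .
  have t1: "(\<Sum>i\<in>UNIV. \<Sum>j\<in>UNIV. d i * B $ i $ j * d j) = B $ a $ a"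
    unfolding d_def by simp
  have ru: "(\<Sum>j\<in>UNIV. B $ a $ j * u j) = RR grp B k a / n"
  proof -
    have "\<And>j. B $ a $ j * u j = (if grp j = k then B $ a $ j else 0) / n" unfolding u_def by simp
    then show ?thesis unfolding RR_def by (simp add: sum_divide_distrib)
  qed
  have t2: "(\<Sum>i\<in>UNIV. \<Sum>j\<in>UNIV. d i * B $ i $ j * u j) = RR grp B k a / n"
  proof -
    have "(\<Sum>i\<in>UNIV. \<Sum>j\<in>UNIV. d i * B $ i $ j * u j) = (\<Sum>i\<in>UNIV. d i * (\<Sum>j\<in>UNIV. B $ i $ j * u j))"
      by (simp add: sum_distrib_left mult.assoc)
    also have "\<dots> = (\<Sum>j\<in>UNIV. B $ a $ j * u j)" unfolding d_def by simp
    finally show ?thesis using ru by simp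
  qed
  have t3: "(\<Sum>i\<in>UNIV. \<Sum>j\<in>UNIV. u i * B $ i $ j * d j) = RR grp B k a / n"
  proof -
    have "(\<Sum>i\<in>UNIV. \<Sum>j\<in>UNIV. u i * B $ i $ j * d j) = (\<Sum>i\<in>UNIV. u i * B $ i $ a)"
      unfolding d_def by simp
    also have "\<dots> = (\<Sum>j\<in>UNIV. B $ a $ j * u j)" using sym by (simp add: mult.commute)
    finally show ?thesis using ru by simp
  qed
  have t4: "(\<Sum>i\<in>UNIV. \<Sum>j\<in>UNIV. u i * B $ i $ j * u j) = II grp B k / n^2"
  proof -
    have "\<And>i j. u i * B $ i $ j * u j = (if grp i = k \<and> grp j = k then B $ i $ j else 0) / n^2"
      unfolding u_def by (simp add: power2_eq_square)
    then show ?thesis unfolding II_def by (simp add: sum_divide_distrib)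
  qed
  have e: "(\<Sum>i\<in>UNIV. \<Sum>j\<in>UNIV. ((if i = a then 1 else 0) - (if grp i = k then 1/n else 0)) * B $ i $ j
         * ((if j = a then 1 else 0) - (if grp j = k then 1/n else 0)))
      = (\<Sum>i\<in>UNIV. \<Sum>j\<in>UNIV. (d i - u i) * B $ i $ j * (d j - u j))"
    by (simp only: d_def u_def)
  show ?thesis
    unfolding e bilin_expand[of d u B] t1 t2 t3 t4 by (simp add: algebra_simps)
qed

lemma sum_RR: "(\<Sum>a\<in>UNIV. if grp a = k then RR grp B k a else 0) = II grp B k"
  unfolding RR_def II_def by (intro sum.cong refl) (simp add: if_distrib)

lemma trace_ineq:
  fixes grp :: "'p::finite \<Rightarrow> 'k::finite"
  assumes BC: "B \<in> setC K" and surj: "surj grp"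
  shows "II grp B k / nn grp k \<le> TT grp B k"
proof -
  define n where "n = nn grp k"
  have n0: "0 < n" unfolding n_def using nn_pos[OF surj] .
  have q: "\<And>a. 0 \<le> B $ a $ a - 2 * RR grp B k a / n + II grp B k / n^2"
  proof -
    fix a
    show "0 \<le> B $ a $ a - 2 * RR grp B k a / n + II grp B k / n^2"
      using psd_quad[OF setC_facts(1)[OF BC], of "\<lambda>i. (if i = a then 1 else 0) - (if grp i = k then 1/n else 0)"]
      unfolding quad_val[OF BC] .
  qed
  have "0 \<le> (\<Sum>a\<in>UNIV. if grp a = k then B $ a $ a - 2 * RR grp B k a / n + II grp B k / n^2 else 0)"
    using q by (intro sum_nonneg) auto
  also have "\<dots> = (\<Sum>a\<in>UNIV. (if grp a = k then B $ a $ a else 0) - 2 / n * (if grp a = k then RR grp B k a else 0)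
     + II grp B k / n^2 * (if grp a = k then 1 else 0))"
    by (intro sum.cong refl) auto
  also have "\<dots> = TT grp B k - 2 / n * (\<Sum>a\<in>UNIV. if grp a = k then RR grp B k a else 0)
     + II grp B k / n^2 * (\<Sum>a\<in>UNIV. if grp a = k then 1 else 0)"
    unfolding TT_def sum.distrib sum_subtractf sum_distrib_left ..
  also have "\<dots> = TT grp B k - 2 / n * II grp B k + II grp B k / n^2 * n"
    unfolding sum_RR card_group_sum n_def nn_def ..
  also have "\<dots> = TT grp B k - II grp B k / n"
    using n0 by (simp add: power2_eq_square field_simps)
  finally show ?thesis unfolding n_def by simp
qed



lemma per_k_arith:
  fixes t l n I g c V m :: real
  assumes "I + l = n" "I / n \<le> t" "0 \<le> g - c" "g - c \<le> V" "0 < m" "m \<le> n" "0 \<le> l"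
  shows "c * t - c - g * (t - 1) \<le> V / m * l"
proof -
  have n0: "0 < n" using assms by linarith
  have "1 - t \<le> l / n" using assms n0 by (simp add: field_simps)
  then have "(g - c) * (1 - t) \<le> (g - c) * (l / n)" using assms(3) by (rule mult_left_mono)
  also have "\<dots> \<le> V * (l / n)" using assms n0 by (intro mult_right_mono) auto
  also have "\<dots> \<le> V * (l / m)"
  proof -
    have v: "0 \<le> V" using assms by linarith
    have w: "l / n \<le> l / m" using assms by (intro divide_left_mono) auto
    show ?thesis using mult_left_mono[OF w v] .
  qed
  finally show ?thesis by (simp add: algebra_simps)
qed

lemma gamma_bound:
  fixes grp :: "'p::finite \<Rightarrow> 'k::finite" and \<gamma> :: "real^'k"
  assumes BC: "B \<in> setC CARD('k)" and surj: "surj grp"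
  defines "g \<equiv> Max (range (\<lambda>a. \<gamma> $ grp a))" and "h \<equiv> Min (range (\<lambda>a. \<gamma> $ grp a))"
  shows "(\<Sum>a\<in>UNIV. \<gamma> $ grp a * B $ a $ a) \<le> (\<Sum>k\<in>UNIV. \<gamma> $ k)
     + (g - h) / real (min_group_size grp) * (\<Sum>c\<in>UNIV. \<Sum>d\<in>UNIV. if grp c \<noteq> grp d then B $ c $ d else 0)"
proof -
  define m where "m = real (min_group_size grp)"
  have e1: "(\<Sum>a\<in>UNIV. \<gamma> $ grp a * B $ a $ a) = (\<Sum>k\<in>UNIV. \<gamma> $ k * TT grp B k)"
    unfolding TT_def
    by (subst sum_by_group[of _ grp]) (simp add: sum_distrib_left if_distrib cong: if_cong)
  have e2: "(\<Sum>k\<in>UNIV. TT grp B k) = real CARD('k)"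
    unfolding TT_def using setC_facts(5)[OF BC] by (simp add: sum_by_group[of _ grp, symmetric])
  have e3: "(\<Sum>k\<in>UNIV. LL grp B k) = (\<Sum>c\<in>UNIV. \<Sum>d\<in>UNIV. if grp c \<noteq> grp d then B $ c $ d else 0)"
  proof -
    have "(\<Sum>c\<in>UNIV. \<Sum>d\<in>UNIV. if grp c \<noteq> grp d then B $ c $ d else 0)
      = (\<Sum>k\<in>UNIV. \<Sum>c\<in>UNIV. if grp c = k then (\<Sum>d\<in>UNIV. if grp c \<noteq> grp d then B $ c $ d else 0) else 0)"
      by (rule sum_by_group)
    also have "\<dots> = (\<Sum>k\<in>UNIV. LL grp B k)"
      unfolding LL_def by (intro sum.cong refl) (auto simp: if_distrib intro!: sum.cong cong: if_cong)
    finally show ?thesis by simp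
  qed
  have pk: "\<And>k. \<gamma> $ k * TT grp B k - \<gamma> $ k - g * (TT grp B k - 1) \<le> (g - h) / m * LL grp B k"
  proof -
    fix k
    obtain a where a: "grp a = k" using surj by (metis surjD)
    have "\<gamma> $ k \<le> g" unfolding g_def using a by (intro Max_ge) auto
    moreover have "h \<le> \<gamma> $ k" unfolding h_def using a by (intro Min_le) auto
    ultimately show "?thesis k"
      using per_k_arith[OF IL[OF BC] trace_ineq[OF BC surj], of g "\<gamma> $ k" "g - h" m]
        min_pos[OF surj] min_le[of grp k] LL_nonneg[OF BC, of grp k]
      unfolding m_def nn_def by simp
  qed
  have "(\<Sum>k\<in>UNIV. \<gamma> $ k * TT grp B k - \<gamma> $ k - g * (TT grp B k - 1)) \<le> (\<Sum>k\<in>UNIV. (g - h) / m * LL grp B k)"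
    using pk by (rule sum_mono)
  then have "(\<Sum>k\<in>UNIV. \<gamma> $ k * TT grp B k) - (\<Sum>k\<in>UNIV. \<gamma> $ k) - g * ((\<Sum>k\<in>UNIV. TT grp B k) - real CARD('k))
     \<le> (g - h) / m * (\<Sum>k\<in>UNIV. LL grp B k)"
    by (simp add: sum_subtractf sum_distrib_left right_diff_distrib) (simp add: mult.commute)
  then show ?thesis unfolding e1 e2 e3 m_def by simp
qed



definition "dd (C::real^'k^'k) j l = C $ j $ j + C $ l $ l - 2 * C $ j $ l"

lemma frob_formula:
  fixes grp :: "'p::finite \<Rightarrow> 'k::finite" and B :: "real^'p^'p"
  assumes rows: "\<And>a. (\<Sum>b\<in>UNIV. B $ a $ b) = 1" and cols: "\<And>b. (\<Sum>a\<in>UNIV. B $ a $ b) = 1"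
  shows "frob_inner (latent_cov grp C \<gamma>) B = (\<Sum>a\<in>UNIV. C $ grp a $ grp a)
     - (\<Sum>c\<in>UNIV. \<Sum>d\<in>UNIV. dd C (grp c) (grp d) * B $ c $ d) / 2 + (\<Sum>a\<in>UNIV. \<gamma> $ grp a * B $ a $ a)"
proof -
  have pt: "\<And>c d. latent_cov grp C \<gamma> $ c $ d * B $ c $ d =
     C $ grp c $ grp c / 2 * B $ c $ d + C $ grp d $ grp d / 2 * B $ c $ d
     - dd C (grp c) (grp d) * B $ c $ d / 2 + (if c = d then \<gamma> $ grp c * B $ c $ c else 0)"
    by (auto simp: latent_cov_entry dd_def field_simps)
  have "frob_inner (latent_cov grp C \<gamma>) B = (\<Sum>c\<in>UNIV. \<Sum>d\<in>UNIV. latent_cov grp C \<gamma> $ c $ d * B $ c $ d)"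
    unfolding frob_inner_sum by (rule sum.swap)
  also have "\<dots> = (\<Sum>c\<in>UNIV. \<Sum>d\<in>UNIV. C $ grp c $ grp c / 2 * B $ c $ d)
     + (\<Sum>c\<in>UNIV. \<Sum>d\<in>UNIV. C $ grp d $ grp d / 2 * B $ c $ d)
     - (\<Sum>c\<in>UNIV. \<Sum>d\<in>UNIV. dd C (grp c) (grp d) * B $ c $ d) / 2
     + (\<Sum>c\<in>UNIV. \<Sum>d\<in>UNIV. if c = d then \<gamma> $ grp c * B $ c $ c else 0)"
    unfolding pt by (simp add: sum.distrib sum_subtractf sum_divide_distrib)
  also have "(\<Sum>c\<in>UNIV. \<Sum>d\<in>UNIV. C $ grp c $ grp c / 2 * B $ c $ d) = (\<Sum>c\<in>UNIV. C $ grp c $ grp c / 2)"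
    by (simp only: sum_distrib_left[symmetric] rows mult_1_right)
  also have "(\<Sum>c\<in>UNIV. \<Sum>d\<in>UNIV. C $ grp d $ grp d / 2 * B $ c $ d) = (\<Sum>d\<in>UNIV. C $ grp d $ grp d / 2)"
    by (subst sum.swap) (simp only: sum_distrib_left[symmetric] cols mult_1_right)
  also have "(\<Sum>c\<in>UNIV. \<Sum>d\<in>UNIV. if c = d then \<gamma> $ grp c * B $ c $ c else 0) = (\<Sum>a\<in>UNIV. \<gamma> $ grp a * B $ a $ a)"
    by simp
  finally show ?thesis by (simp add: sum_divide_distrib[symmetric])
qed

lemma quad_form_eq: "x \<bullet> (M *v x) = (\<Sum>i\<in>UNIV. \<Sum>j\<in>UNIV. x $ i * M $ i $ j * x $ j)"
  by (simp add: inner_vec_def matrix_vector_mult_def sum_distrib_left mult.assoc)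

lemma Bstar_entry: "Bstar grp $ a $ b = (if grp a = grp b then 1 / real (card (group_of grp (grp a))) else 0)"
  by (simp add: Bstar_def)

lemma Bstar_in_setD:
  fixes grp :: "'p::finite \<Rightarrow> 'k::finite"
  assumes surj: "surj grp"
  shows "Bstar grp \<in> setD CARD('k)"
proof -
  let ?B = "Bstar grp"
  let ?n = "\<lambda>k. real (card (group_of grp k))"
  have npos: "\<And>k. 0 < ?n k" using card_group_pos[OF surj] by simp
  have sym: "transpose ?B = ?B"
    by (auto simp: vec_eq_iff transpose_def Bstar_entry)
  have cols: "\<And>b. (\<Sum>a\<in>UNIV. ?B $ a $ b) = 1"
  proof -
    fix b
    have "(\<Sum>a\<in>UNIV. ?B $ a $ b) = (\<Sum>a\<in>UNIV. 1 / ?n (grp b) * (if grp a = grp b then 1 else 0))"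
      by (intro sum.cong refl) (simp add: Bstar_entry)
    also have "\<dots> = 1" using npos[of "grp b"] by (simp only: sum_distrib_left[symmetric] card_group_sum) (simp add: field_simps card_gt_0_iff)
    finally show "?thesis b" .
  qed
  have nonneg: "\<And>a b. 0 \<le> ?B $ a $ b" by (simp add: Bstar_entry)
  have tr: "trace ?B = real CARD('k)"
    using sum_group_const[OF surj, of "\<lambda>k. 1"] by (simp add: trace_def Bstar_entry)
  have psd: "psd ?B"
    unfolding psd_def
  proof (intro conjI allI sym)
    fix x :: "real^'p"
    define S where "S k = (\<Sum>j\<in>UNIV. if grp j = k then x $ j else 0)" for k
    have "x \<bullet> (?B *v x) = (\<Sum>i\<in>UNIV. x $ i / ?n (grp i) * S (grp i))"
      unfolding quad_form_eq S_def
      by (intro sum.cong refl) (auto simp: Bstar_entry sum_distrib_left intro!: sum.cong)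
    also have "\<dots> = (\<Sum>k\<in>UNIV. \<Sum>i\<in>UNIV. if grp i = k then x $ i / ?n k * S k else 0)"
      by (subst sum_by_group[of _ grp]) (auto intro!: sum.cong)
    also have "\<dots> = (\<Sum>k\<in>UNIV. S k * S k / ?n k)"
    proof (intro sum.cong refl)
      fix k
      have "\<And>i. (if grp i = k then x $ i / ?n k * S k else 0) = (if grp i = k then x $ i else 0) * S k / ?n k"
        by simp
      then show "(\<Sum>i\<in>UNIV. if grp i = k then x $ i / ?n k * S k else 0) = S k * S k / ?n k"
        by (simp only: sum_divide_distrib[symmetric] sum_distrib_right[symmetric] S_def[symmetric])
    qed
    also have "\<dots> \<ge> 0" using npos by (intro sum_nonneg) simp
    finally show "0 \<le> x \<bullet> (?B *v x)" .
  qed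
  have idem: "?B ** ?B = ?B"
  proof -
    have "\<And>a c. (\<Sum>b\<in>UNIV. ?B $ a $ b * ?B $ b $ c) = ?B $ a $ c"
    proof -
      fix a c
      have "(\<Sum>b\<in>UNIV. ?B $ a $ b * ?B $ b $ c) =
          (\<Sum>b\<in>UNIV. (if grp a = grp c then 1 / (?n (grp a) * ?n (grp a)) else 0) * (if grp b = grp a then 1 else 0))"
        by (intro sum.cong refl) (auto simp: Bstar_entry)
      also have "\<dots> = ?B $ a $ c"
        using npos[of "grp a"] by (simp add: sum_distrib_left[symmetric] card_group_sum Bstar_entry)
      finally show "?thesis a c" .
    qed
    then show ?thesis by (simp add: vec_eq_iff matrix_matrix_mult_def)
  qed
  show ?thesis unfolding setD_def setC_def using psd cols nonneg tr idem by auto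
qed



lemma spread_eq:
  fixes grp :: "'p::finite \<Rightarrow> 'k::finite"
  shows "diag_spread (Gamma_mat grp \<gamma>) = Max (range (\<lambda>a. \<gamma> $ grp a)) - Min (range (\<lambda>a. \<gamma> $ grp a))"
  by (simp add: diag_spread_def Gamma_mat_def diag_mat_def)

lemma sep_dd:
  fixes grp :: "'p::finite \<Rightarrow> 'k::finite" and C :: "real^'k^'k"
  assumes sep: "Delta C > ereal (2 / real (min_group_size grp) * diag_spread (Gamma_mat grp \<gamma>))"
    and jl: "j \<noteq> l"
  shows "2 / real (min_group_size grp) * (Max (range (\<lambda>a. \<gamma> $ grp a)) - Min (range (\<lambda>a. \<gamma> $ grp a))) < dd C j l"
proof -
  have "Delta C \<le> ereal (dd C j l)"
    unfolding Delta_def dd_def using jl by (intro INF_lower2[of "(j,l)"]) auto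
  then have "ereal (2 / real (min_group_size grp) * diag_spread (Gamma_mat grp \<gamma>)) < ereal (dd C j l)"
    by (rule less_le_trans[OF sep])
  then show ?thesis unfolding spread_eq by simp
qed

lemma dd_same[simp]: "dd C k k = 0" by (simp add: dd_def)

lemma main_ineq:
  fixes grp :: "'p::finite \<Rightarrow> 'k::finite" and C :: "real^'k^'k" and \<gamma> :: "real^'k"
  assumes BC: "B \<in> setC CARD('k)" and surj: "surj grp"
  defines "V \<equiv> Max (range (\<lambda>a. \<gamma> $ grp a)) - Min (range (\<lambda>a. \<gamma> $ grp a))"
    and "m \<equiv> real (min_group_size grp)"
  shows "(\<Sum>c\<in>UNIV. \<Sum>d\<in>UNIV. if grp c \<noteq> grp d then (dd C (grp c) (grp d) / 2 - V / m) * B $ c $ d else 0)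
     \<le> frob_inner (latent_cov grp C \<gamma>) (Bstar grp) - frob_inner (latent_cov grp C \<gamma>) B"
proof -
  have BsC: "Bstar grp \<in> setC CARD('k)" using Bstar_in_setD[OF surj] by (simp add: setD_def)
  have fB: "frob_inner (latent_cov grp C \<gamma>) B = (\<Sum>a\<in>UNIV. C $ grp a $ grp a)
     - (\<Sum>c\<in>UNIV. \<Sum>d\<in>UNIV. dd C (grp c) (grp d) * B $ c $ d) / 2 + (\<Sum>a\<in>UNIV. \<gamma> $ grp a * B $ a $ a)"
    by (rule frob_formula) (use setC_facts[OF BC] in auto)
  have fBs: "frob_inner (latent_cov grp C \<gamma>) (Bstar grp) = (\<Sum>a\<in>UNIV. C $ grp a $ grp a)
     - (\<Sum>c\<in>UNIV. \<Sum>d\<in>UNIV. dd C (grp c) (grp d) * Bstar grp $ c $ d) / 2 + (\<Sum>a\<in>UNIV. \<gamma> $ grp a * Bstar grp $ a $ a)"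
    by (rule frob_formula) (use setC_facts[OF BsC] in auto)
  have DDs: "(\<Sum>c\<in>UNIV. \<Sum>d\<in>UNIV. dd C (grp c) (grp d) * Bstar grp $ c $ d) = 0"
    by (intro sum.neutral ballI) (simp add: Bstar_entry)
  have Gs: "(\<Sum>a\<in>UNIV. \<gamma> $ grp a * Bstar grp $ a $ a) = (\<Sum>k\<in>UNIV. \<gamma> $ k)"
    using sum_group_const[OF surj, of "\<lambda>k. \<gamma> $ k"] by (simp add: Bstar_entry)
  have G: "(\<Sum>a\<in>UNIV. \<gamma> $ grp a * B $ a $ a) \<le> (\<Sum>k\<in>UNIV. \<gamma> $ k)
     + V / m * (\<Sum>c\<in>UNIV. \<Sum>d\<in>UNIV. if grp c \<noteq> grp d then B $ c $ d else 0)"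
    using gamma_bound[OF BC surj, of \<gamma>] unfolding V_def m_def .
  have DD: "(\<Sum>c\<in>UNIV. \<Sum>d\<in>UNIV. dd C (grp c) (grp d) * B $ c $ d)
      = (\<Sum>c\<in>UNIV. \<Sum>d\<in>UNIV. if grp c \<noteq> grp d then dd C (grp c) (grp d) * B $ c $ d else 0)"
    by (intro sum.cong refl) auto
  have R: "(\<Sum>c\<in>UNIV. \<Sum>d\<in>UNIV. if grp c \<noteq> grp d then (dd C (grp c) (grp d) / 2 - V / m) * B $ c $ d else 0)
     = (\<Sum>c\<in>UNIV. \<Sum>d\<in>UNIV. if grp c \<noteq> grp d then dd C (grp c) (grp d) * B $ c $ d else 0) / 2
       - V / m * (\<Sum>c\<in>UNIV. \<Sum>d\<in>UNIV. if grp c \<noteq> grp d then B $ c $ d else 0)"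
  proof -
    have "\<And>c d. (if grp c \<noteq> grp d then (dd C (grp c) (grp d) / 2 - V / m) * B $ c $ d else 0)
      = (if grp c \<noteq> grp d then dd C (grp c) (grp d) * B $ c $ d else 0) / 2
        - V / m * (if grp c \<noteq> grp d then B $ c $ d else 0)" by (simp add: algebra_simps)
    then show ?thesis by (simp add: sum_subtractf sum_divide_distrib sum_distrib_left)
  qed
  show ?thesis unfolding fB fBs DDs Gs R DD[symmetric] using G by simp
qed

lemma R_nonneg:
  fixes grp :: "'p::finite \<Rightarrow> 'k::finite" and C :: "real^'k^'k"
  assumes H: "\<And>j l. j \<noteq> l \<Longrightarrow> 2 / m * V < dd C j l" and nn: "\<And>c d. 0 \<le> B $ c $ d"
  shows "\<And>c d. 0 \<le> (if grp c \<noteq> grp d then (dd C (grp c) (grp d) / 2 - V / m) * B $ c $ d else 0)"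
proof -
  fix c d
  show "0 \<le> (if grp c \<noteq> grp d then (dd C (grp c) (grp d) / 2 - V / m) * B $ c $ d else 0)"
  proof (cases "grp c = grp d")
    case False
    have "2 * (V / m) < dd C (grp c) (grp d)" using H[OF False] by simp
    then have "0 < dd C (grp c) (grp d) / 2 - V / m" by linarith
    then show ?thesis using False nn[of c d] by simp
  qed simp
qed



lemma uniq:
  fixes grp :: "'p::finite \<Rightarrow> 'k::finite" and C :: "real^'k^'k" and \<gamma> :: "real^'k"
  assumes BD: "B \<in> setD CARD('k)" and surj: "surj grp"
    and H: "\<And>j l. j \<noteq> l \<Longrightarrow> 2 / real (min_group_size grp) * (Max (range (\<lambda>a. \<gamma> $ grp a)) - Min (range (\<lambda>a. \<gamma> $ grp a))) < dd C j l"
    and le: "frob_inner (latent_cov grp C \<gamma>) (Bstar grp) \<le> frob_inner (latent_cov grp C \<gamma>) B"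
  shows "B = Bstar grp"
proof -
  define V where "V = Max (range (\<lambda>a. \<gamma> $ grp a)) - Min (range (\<lambda>a. \<gamma> $ grp a))"
  define m where "m = real (min_group_size grp)"
  define t where "t c d = (if grp c \<noteq> grp d then (dd C (grp c) (grp d) / 2 - V / m) * B $ c $ d else 0)" for c d
  have BC: "B \<in> setC CARD('k)" using BD by (simp add: setD_def)
  note F = setC_facts[OF BC]
  have t0: "\<And>c d. 0 \<le> t c d" unfolding t_def
    by (rule R_nonneg[where m=m and V=V and C=C and grp=grp]) (use H F(4) in \<open>auto simp: m_def V_def\<close>)
  have "(\<Sum>c\<in>UNIV. \<Sum>d\<in>UNIV. t c d) \<le> 0"
    using main_ineq[OF BC surj, of C \<gamma>] le unfolding t_def V_def m_def by simp
  moreover have "0 \<le> (\<Sum>c\<in>UNIV. \<Sum>d\<in>UNIV. t c d)" using t0 by (intro sum_nonneg) auto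
  ultimately have "(\<Sum>c\<in>UNIV. \<Sum>d\<in>UNIV. t c d) = 0" by linarith
  then have "\<forall>c\<in>UNIV. (\<Sum>d\<in>UNIV. t c d) = 0"
    by (subst sum_nonneg_eq_0_iff[symmetric]) (auto intro: sum_nonneg t0)
  then have tz: "\<And>c d. t c d = 0"
    using sum_nonneg_eq_0_iff[of UNIV "t c" for c] t0 by auto
  have off: "\<And>c d. grp c \<noteq> grp d \<Longrightarrow> B $ c $ d = 0"
  proof -
    fix c d assume cd: "grp c \<noteq> grp d"
    have "2 * (V / m) < dd C (grp c) (grp d)" using H[OF cd] unfolding V_def m_def by simp
    then have "0 < dd C (grp c) (grp d) / 2 - V / m" by linarith
    then show "B $ c $ d = 0" using tz[of c d] cd unfolding t_def by simp
  qed
  define n where "n a = real (card (group_of grp (grp a)))" for a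
  have npos: "\<And>a. 0 < n a" unfolding n_def using card_group_pos[OF surj] by simp
  have idem: "\<And>a. (\<Sum>c\<in>UNIV. B $ a $ c * B $ c $ a) = B $ a $ a"
  proof -
    fix a
    have "B ** B = B" using BD by (simp add: setD_def)
    then have "(B ** B) $ a $ a = B $ a $ a" by simp
    then show "?thesis a" by (simp add: matrix_matrix_mult_def)
  qed
  define q where "q a c = (if grp a = grp c then (B $ a $ c - 1 / n a)^2 else 0)" for a c
  have qa: "\<And>a. (\<Sum>c\<in>UNIV. q a c) = B $ a $ a - 1 / n a"
  proof -
    fix a
    have pt: "\<And>c. q a c = B $ a $ c * B $ c $ a - 2 / n a * B $ a $ c + (1 / (n a * n a)) * (if grp c = grp a then 1 else 0)"
      unfolding q_def using off[of a] F(6)[of a] by (auto simp: power2_eq_square algebra_simps)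
    have "(\<Sum>c\<in>UNIV. q a c) = (\<Sum>c\<in>UNIV. B $ a $ c * B $ c $ a) - 2 / n a * (\<Sum>c\<in>UNIV. B $ a $ c)
       + (1 / (n a * n a)) * (\<Sum>c\<in>UNIV. if grp c = grp a then 1 else 0)"
      unfolding pt by (simp add: sum.distrib sum_subtractf sum_distrib_left)
    also have "\<dots> = B $ a $ a - 2 / n a + 1 / n a"
      using npos[of a] unfolding idem F(3) card_group_sum n_def by (simp add: field_simps)
    finally show "?thesis a" by simp
  qed
  have "(\<Sum>a\<in>UNIV. \<Sum>c\<in>UNIV. q a c) = (\<Sum>a\<in>UNIV. B $ a $ a) - (\<Sum>a\<in>UNIV. 1 / n a)"
    unfolding qa by (simp add: sum_subtractf)
  also have "\<dots> = 0"
    using F(5) sum_group_const[OF surj, of "\<lambda>k. 1"] unfolding n_def by simp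
  finally have qs: "(\<Sum>a\<in>UNIV. \<Sum>c\<in>UNIV. q a c) = 0" .
  have q0: "\<And>a c. 0 \<le> q a c" unfolding q_def by simp
  have "\<forall>a\<in>UNIV. (\<Sum>c\<in>UNIV. q a c) = 0"
    using qs by (subst sum_nonneg_eq_0_iff[symmetric]) (auto intro: sum_nonneg q0)
  then have qz: "\<And>a c. q a c = 0"
    using sum_nonneg_eq_0_iff[of UNIV "q a" for a] q0 by auto
  show ?thesis
  proof (simp add: vec_eq_iff, intro allI)
    fix a c
    show "B $ a $ c = Bstar grp $ a $ c"
    proof (cases "grp a = grp c")
      case True
      then show ?thesis using qz[of a c] unfolding q_def Bstar_entry n_def by simp
    next
      case False
      then show ?thesis using off[OF False] by (simp add: Bstar_entry)
    qed
  qed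
qed

theorem mainTheorem2:
  fixes grp :: "'p::finite \<Rightarrow> 'k::finite"
    and C :: "real^'k^'k" and \<gamma> :: "real^'k"
  assumes partition: "surj grp"
    and C_cov: "psd C"
    and gamma_nonneg: "\<forall>k. 0 \<le> \<gamma> $ k"
    and sep: "Delta C > ereal (2 / real (min_group_size grp) * diag_spread (Gamma_mat grp \<gamma>))"
  shows "{B \<in> setD CARD('k). \<forall>B' \<in> setD CARD('k).
            frob_inner (latent_cov grp C \<gamma>) B' \<le> frob_inner (latent_cov grp C \<gamma>) B}
         = {Bstar grp}"
proof -
  define V where "V = Max (range (\<lambda>a. \<gamma> $ grp a)) - Min (range (\<lambda>a. \<gamma> $ grp a))"
  define m where "m = real (min_group_size grp)"
  have H: "\<And>j l. j \<noteq> l \<Longrightarrow> 2 / real (min_group_size grp) * (Max (range (\<lambda>a. \<gamma> $ grp a)) - Min (range (\<lambda>a. \<gamma> $ grp a))) < dd C j l"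
    using sep_dd[OF sep] by blast
  have BsD: "Bstar grp \<in> setD CARD('k)" by (rule Bstar_in_setD[OF partition])
  have maxi: "\<And>B'. B' \<in> setD CARD('k) \<Longrightarrow>
      frob_inner (latent_cov grp C \<gamma>) B' \<le> frob_inner (latent_cov grp C \<gamma>) (Bstar grp)"
  proof -
    fix B' :: "real^'p^'p" assume B'D: "B' \<in> setD CARD('k)"
    then have B'C: "B' \<in> setC CARD('k)" by (simp add: setD_def)
    have "0 \<le> (\<Sum>c\<in>UNIV. \<Sum>d\<in>UNIV. if grp c \<noteq> grp d then (dd C (grp c) (grp d) / 2 - V / m) * B' $ c $ d else 0)"
      by (intro sum_nonneg R_nonneg[where m=m and V=V and C=C and grp=grp]) (use H setC_facts(4)[OF B'C] in \<open>auto simp: m_def V_def\<close>)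
    then show "frob_inner (latent_cov grp C \<gamma>) B' \<le> frob_inner (latent_cov grp C \<gamma>) (Bstar grp)"
      using main_ineq[OF B'C partition, of C \<gamma>] unfolding V_def m_def by simp
  qed
  show ?thesis
  proof
    show "{Bstar grp} \<subseteq> {B \<in> setD CARD('k). \<forall>B' \<in> setD CARD('k).
            frob_inner (latent_cov grp C \<gamma>) B' \<le> frob_inner (latent_cov grp C \<gamma>) B}"
      using BsD maxi by auto
  next
    show "{B \<in> setD CARD('k). \<forall>B' \<in> setD CARD('k).
            frob_inner (latent_cov grp C \<gamma>) B' \<le> frob_inner (latent_cov grp C \<gamma>) B} \<subseteq> {Bstar grp}"
    proof
      fix B assume "B \<in> {B \<in> setD CARD('k). \<forall>B' \<in> setD CARD('k).
            frob_inner (latent_cov grp C \<gamma>) B' \<le> frob_inner (latent_cov grp C \<gamma>) B}"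
      then have BD: "B \<in> setD CARD('k)" and le: "frob_inner (latent_cov grp C \<gamma>) (Bstar grp) \<le> frob_inner (latent_cov grp C \<gamma>) B"
        using BsD by auto
      show "B \<in> {Bstar grp}" using uniq[OF BD partition H le] by simp
    qed
  qed
qed

end
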